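(* Let $C$ be a closed convex set in a finite-dimensional Euclidean space. Then: (i) (Transitivity) if $\hat F$ is a face of $F$ and $F$ is a face of $C$, where $F$ is an amenable face of $C$, then $\hat F$ is an amenable face of $F$ if and only if $\hat F$ is an amenable face of $C$; (ii) (Inheritance) if $C$ is amenable, then every face $F$ of $C$ is an amenable convex set; (iii) $C$ is amenable if and only if every maximal face $F$ of $C$ is both an amenable face of $C$ and an amenable convex set by itself.
   Context: A face of a closed convex set $C$ is a closed convex subset $F\subseteq C$ such that whenever $x,y\in C$ and $\alpha x+(1-\alpha)y\in F$ for some $\alpha\in(0,1)$, then $x,y\in F$. A face $F$ of $C$ is maximal if $F\ne C$ and there is no face $\hat F$ of $C$ with $\hat F\ne F$, $\hat F\ne C$ such that $F$ is a face of $\hat F$. A face $F$ of $C$ is amenable if for every bounded set $B$ there exists $\kappa>0$ such that $\operatorname{dist}(x,F)\le\kappa\operatorname{dist}(x,C)$ for all $x\in(\operatorname{aff}F)\cap B$; $C$ is amenable if all its faces are amenable. *)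

theory Defs
  imports "HOL-Analysis.Analysis"
begin

text \<open>The library notion face_of gives exactly the convex-subset-plus-extremality part.\<close>
definition is_face :: "'a::euclidean_space set \<Rightarrow> 'a set \<Rightarrow> bool" where
  "is_face F C \<longleftrightarrow> closed F \<and> F face_of C"

definition maximal_face :: "'a::euclidean_space set \<Rightarrow> 'a set \<Rightarrow> bool" where
  "maximal_face F C \<longleftrightarrow> is_face F C \<and> F \<noteq> C \<and>
     \<not> (\<exists>G. is_face G C \<and> G \<noteq> F \<and> G \<noteq> C \<and> is_face F G)"

definition amenable_face :: "'a::euclidean_space set \<Rightarrow> 'a set \<Rightarrow> bool" where
  "amenable_face F C \<longleftrightarrow> is_face F C \<and>
     (\<forall>B. bounded B \<longrightarrow> (\<exists>\<kappa>>0. \<forall>x \<in> affine hull F \<inter> B.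
         infdist x F \<le> \<kappa> * infdist x C))"

definition amenable :: "'a::euclidean_space set \<Rightarrow> bool" where
  "amenable C \<longleftrightarrow> (\<forall>F. is_face F C \<longrightarrow> amenable_face F C)"

end

theory Submission
  imports Defs
begin

lemma am_trans_fwd:
  assumes FC: "amenable_face F C" and GF: "amenable_face G F"
  shows "amenable_face G C"
proof -
  have fF: "is_face F C" and fG: "is_face G F" using FC GF by (auto simp: amenable_face_def)
  have GC: "is_face G C" using fF fG by (auto simp: is_face_def intro: face_of_trans)
  have GsF: "G \<subseteq> F" using fG by (auto simp: is_face_def face_of_def)
  have "\<exists>\<kappa>>0. \<forall>x \<in> affine hull G \<inter> B. infdist x G \<le> \<kappa> * infdist x C" if "bounded B" for B
  proof -
    obtain k1 where k1: "k1 > 0" "\<forall>x \<in> affine hull F \<inter> B. infdist x F \<le> k1 * infdist x C"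
      using FC \<open>bounded B\<close> unfolding amenable_face_def by blast
    obtain k2 where k2: "k2 > 0" "\<forall>x \<in> affine hull G \<inter> B. infdist x G \<le> k2 * infdist x F"
      using GF \<open>bounded B\<close> unfolding amenable_face_def by blast
    have "\<forall>x \<in> affine hull G \<inter> B. infdist x G \<le> (k2 * k1) * infdist x C"
    proof
      fix x assume x: "x \<in> affine hull G \<inter> B"
      then have "x \<in> affine hull F \<inter> B" using hull_mono[OF GsF] by blast
      then have "infdist x F \<le> k1 * infdist x C" using k1 by blast
      then have "k2 * infdist x F \<le> k2 * (k1 * infdist x C)" using k2 by (simp add: mult_left_mono)
      moreover have "infdist x G \<le> k2 * infdist x F" using k2 x by blast
      ultimately show "infdist x G \<le> (k2 * k1) * infdist x C" by (simp add: mult.assoc)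
    qed
    then show ?thesis using k1 k2 by (intro exI[of _ "k2*k1"]) auto
  qed
  then show ?thesis using GC by (simp add: amenable_face_def)
qed

lemma am_trans_bwd:
  assumes fF: "is_face F C" and GC: "amenable_face G C" and fG: "is_face G F"
  shows "amenable_face G F"
proof -
  have FsC: "F \<subseteq> C" using fF by (auto simp: is_face_def face_of_def)
  have GsF: "G \<subseteq> F" using fG by (auto simp: is_face_def face_of_def)
  have "\<exists>\<kappa>>0. \<forall>x \<in> affine hull G \<inter> B. infdist x G \<le> \<kappa> * infdist x F" if "bounded B" for B
  proof -
    obtain k where k: "k > 0" "\<forall>x \<in> affine hull G \<inter> B. infdist x G \<le> k * infdist x C"
      using GC \<open>bounded B\<close> unfolding amenable_face_def by blast
    have "\<forall>x \<in> affine hull G \<inter> B. infdist x G \<le> k * infdist x F"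
    proof
      fix x assume x: "x \<in> affine hull G \<inter> B"
      show "infdist x G \<le> k * infdist x F"
      proof (cases "G = {}")
        case True then show ?thesis using k infdist_nonneg[of x F] by (simp add: infdist_def)
      next
        case False
        then have "F \<noteq> {}" using GsF by auto
        then have "infdist x C \<le> infdist x F" using infdist_mono[OF FsC] by blast
        then have "k * infdist x C \<le> k * infdist x F" using k by (simp add: mult_left_mono)
        moreover have "infdist x G \<le> k * infdist x C" using k x by blast
        ultimately show ?thesis by linarith
      qed
    qed
    then show ?thesis using k by blast
  qed
  then show ?thesis using fG by (simp add: amenable_face_def)
qed

lemma am_self:
  assumes "closed C" "convex C"
  shows "amenable_face C C"
  using assms unfolding amenable_face_def is_face_def
  by (auto intro!: face_of_refl exI[of _ 1])

lemma max_exists_aux: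
  fixes C :: "'a::euclidean_space set"
  assumes "closed C" "convex C"
  shows "\<forall>G. is_face G C \<and> G \<noteq> C \<and> nat (int DIM('a) - aff_dim G) = n \<longrightarrow>
          (\<exists>F. maximal_face F C \<and> is_face G F)"
proof (induction n rule: less_induct)
  case (less n)
  show ?case
  proof (intro allI impI)
    fix G assume G: "is_face G C \<and> G \<noteq> C \<and> nat (int DIM('a) - aff_dim G) = n"
    have cG: "convex G" "closed G" using G by (auto simp: is_face_def face_of_imp_convex)
    show "\<exists>F. maximal_face F C \<and> is_face G F"
    proof (cases "maximal_face G C")
      case True
      then show ?thesis using cG by (auto simp: is_face_def intro: face_of_refl)
    next
      case False
      then obtain H where H: "is_face H C" "H \<noteq> G" "H \<noteq> C" "is_face G H"
        using G unfolding maximal_face_def by blast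
      have "convex H" using H by (auto simp: is_face_def face_of_imp_convex)
      then have "aff_dim G < aff_dim H" using H face_of_aff_dim_lt by (auto simp: is_face_def)
      moreover have "aff_dim H \<le> int DIM('a)" by (rule aff_dim_le_DIM)
      ultimately have "nat (int DIM('a) - aff_dim H) < n" using G by auto
      then obtain F where F: "maximal_face F C" "is_face H F" using less H by blast
      then show ?thesis using H cG by (auto simp: is_face_def intro: face_of_trans)
    qed
  qed
qed

lemma max_exists:
  fixes C :: "'a::euclidean_space set"
  assumes "closed C" "convex C" "is_face G C" "G \<noteq> C"
  shows "\<exists>F. maximal_face F C \<and> is_face G F"
  using max_exists_aux[OF assms(1,2)] assms(3,4) by blast

theorem proposition3p6:
  fixes C :: "'a::euclidean_space set"
  assumes "closed C" and "convex C"
  shows "(\<forall>F G. is_face F C \<and> amenable_face F C \<and> is_face G F \<longrightarrow>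
            (amenable_face G F \<longleftrightarrow> amenable_face G C))
       \<and> (amenable C \<longrightarrow> (\<forall>F. is_face F C \<longrightarrow> amenable F))
       \<and> (amenable C \<longleftrightarrow> (\<forall>F. maximal_face F C \<longrightarrow> amenable_face F C \<and> amenable F))"
proof -
  have i: "\<forall>F G. is_face F C \<and> amenable_face F C \<and> is_face G F \<longrightarrow>
            (amenable_face G F \<longleftrightarrow> amenable_face G C)"
    using am_trans_fwd am_trans_bwd by blast
  have ii: "amenable C \<longrightarrow> (\<forall>F. is_face F C \<longrightarrow> amenable F)"
  proof (intro impI allI)
    fix F assume aC: "amenable C" and F: "is_face F C"
    show "amenable F" unfolding amenable_def
    proof (intro allI impI)
      fix G assume G: "is_face G F"
      then have "is_face G C" using F by (auto simp: is_face_def intro: face_of_trans)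
      then have "amenable_face G C" using aC by (simp add: amenable_def)
      then show "amenable_face G F" using am_trans_bwd F G by blast
    qed
  qed
  have iii: "amenable C \<longleftrightarrow> (\<forall>F. maximal_face F C \<longrightarrow> amenable_face F C \<and> amenable F)"
  proof
    assume "amenable C"
    then show "\<forall>F. maximal_face F C \<longrightarrow> amenable_face F C \<and> amenable F"
      using ii by (auto simp: amenable_def maximal_face_def)
  next
    assume M: "\<forall>F. maximal_face F C \<longrightarrow> amenable_face F C \<and> amenable F"
    show "amenable C" unfolding amenable_def
    proof (intro allI impI)
      fix G assume G: "is_face G C"
      show "amenable_face G C"
      proof (cases "G = C")
        case True then show ?thesis using am_self assms by blast
      next
        case False
        then obtain F where F: "maximal_face F C" "is_face G F"
          using max_exists assms G by blast
        then have "amenable_face F C" "amenable F" using M by auto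
        then have "amenable_face G F" using F by (simp add: amenable_def)
        then show ?thesis using am_trans_fwd \<open>amenable_face F C\<close> by blast
      qed
    qed
  qed
  show ?thesis using i ii iii by blast
qed

end
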